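(* The trace norm $\|\cdot\|_1$ is the minimum element of the class of $L$-norms $\||\cdot\||$ on $\mathbb{M}_n$ satisfying $\omega(A)\le\||A\||$ for all $A\in\mathbb{M}_n$.
   Context: $\mathbb{M}_n$ is the algebra of complex $n\times n$ matrices with identity $I$; $\|A\|_1=\mathrm{Tr}(|A|)$ is the trace norm and $\omega(A)=\sup\{|\langle x,Ax\rangle|:\|x\|=1\}$ the numerical radius. A norm $\||\cdot\||$ on $\mathbb{M}_n$ is an $L$-norm if $\sum_{i=1}^k\||C_iXC_i^*\||\le\||X\||$ for all $k$, all $X$ and all $C_i$ with $\sum_{i=1}^k C_i^*C_i=I$. *)

theory Defs
  imports "HOL-Analysis.Analysis"
begin

definition cinner :: "complex^'n \<Rightarrow> complex^'n \<Rightarrow> complex" where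
  "cinner x y = (\<Sum>i\<in>UNIV. cnj (x$i) * y$i)"

definition madj :: "complex^'n^'n \<Rightarrow> complex^'n^'n" where
  "madj A = (\<chi> i j. cnj (A$j$i))"

definition mscale :: "complex \<Rightarrow> complex^'n^'n \<Rightarrow> complex^'n^'n" where
  "mscale c A = (\<chi> i j. c * A$i$j)"

definition psd :: "complex^'n^'n \<Rightarrow> bool" where
  "psd A \<longleftrightarrow> (\<forall>x. Im (cinner x (A *v x)) = 0 \<and> Re (cinner x (A *v x)) \<ge> 0)"

definition mabs :: "complex^'n^'n \<Rightarrow> complex^'n^'n" where
  "mabs A = (THE P. psd P \<and> P ** P = madj A ** A)"

definition trace_norm :: "complex^'n^'n \<Rightarrow> real" where
  "trace_norm A = Re (trace (mabs A))"

definition numerical_radius :: "complex^'n^'n \<Rightarrow> real" where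
  "numerical_radius A = (SUP x\<in>{x. norm x = 1}. cmod (cinner x (A *v x)))"

definition is_matrix_norm :: "(complex^'n^'n \<Rightarrow> real) \<Rightarrow> bool" where
  "is_matrix_norm N \<longleftrightarrow>
     (\<forall>A. N A \<ge> 0) \<and> (\<forall>A. N A = 0 \<longleftrightarrow> A = 0) \<and>
     (\<forall>c A. N (mscale c A) = cmod c * N A) \<and> (\<forall>A B. N (A + B) \<le> N A + N B)"

definition is_L_norm :: "(complex^'n^'n \<Rightarrow> real) \<Rightarrow> bool" where
  "is_L_norm N \<longleftrightarrow> is_matrix_norm N \<and>
     (\<forall>(k::nat) (C::nat \<Rightarrow> complex^'n^'n) X.
        (\<Sum>i<k. madj (C i) ** C i) = mat 1 \<longrightarrow>
        (\<Sum>i<k. N (C i ** X ** madj (C i))) \<le> N X)"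

end

theory Submission
  imports Defs
begin

definition outer :: "complex^'n \<Rightarrow> complex^'n \<Rightarrow> complex^'n^'n" where
  "outer u v = (\<chi> i j. u$i * cnj (v$j))"

lemma cinner_add_right: "cinner x (y + z) = cinner x y + cinner x z"
  by (simp add: cinner_def sum.distrib distrib_left)
lemma cinner_add_left: "cinner (x + y) z = cinner x z + cinner y z"
  by (simp add: cinner_def sum.distrib distrib_right)
lemma cinner_diff_right: "cinner x (y - z) = cinner x y - cinner x z"
  by (simp add: cinner_def sum_subtractf right_diff_distrib)
lemma cinner_diff_left: "cinner (x - y) z = cinner x z - cinner y z"
  by (simp add: cinner_def sum_subtractf left_diff_distrib)
lemma cinner_scale_right: "cinner x (c *s y) = c * cinner x y"
  by (simp add: cinner_def sum_distrib_left mult_ac)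
lemma cinner_scale_left: "cinner (c *s x) y = cnj c * cinner x y"
  by (simp add: cinner_def sum_distrib_left mult_ac)
lemma cinner_zero_right[simp]: "cinner x 0 = 0" by (simp add: cinner_def)
lemma cinner_zero_left[simp]: "cinner 0 x = 0" by (simp add: cinner_def)
lemma cinner_commute: "cinner y x = cnj (cinner x y)"
  by (simp add: cinner_def mult.commute)
lemma cinner_sum_right: "cinner x (\<Sum>b\<in>B. f b) = (\<Sum>b\<in>B. cinner x (f b))"
  by (simp add: cinner_def sum_distrib_left) (rule sum.swap)
lemma cinner_sum_left: "cinner (\<Sum>b\<in>B. f b) x = (\<Sum>b\<in>B. cinner (f b) x)"
  by (simp add: cinner_def sum_distrib_right cnj_sum) (rule sum.swap)

lemma norm_sq_vec: "(norm (x::complex^'n))^2 = (\<Sum>i\<in>UNIV. (cmod (x$i))^2)"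
  by (simp add: norm_vec_def L2_set_def sum_nonneg)

lemma cnj_mult_self: "cnj z * z = of_real ((cmod z)^2)"
  by (subst mult.commute) (rule complex_norm_square[symmetric])

lemma cinner_self: "cinner x x = of_real ((norm x)^2)"
proof -
  have "cinner x x = (\<Sum>i\<in>UNIV. of_real ((cmod (x$i))^2))"
    unfolding cinner_def by (rule sum.cong, rule refl, rule cnj_mult_self)
  also have "\<dots> = of_real ((norm x)^2)" by (simp only: norm_sq_vec of_real_sum)
  finally show ?thesis .
qed

lemma inner_cinner: "inner x y = Re (cinner x y)"
  by (simp add: inner_vec_def cinner_def inner_complex_def)

lemma norm_scale: "norm (c *s (x::complex^'n)) = cmod c * norm x"
proof -
  have "(norm (c *s x))^2 = (cmod c * norm x)^2"
    by (simp add: norm_sq_vec norm_mult power_mult_distrib sum_distrib_left)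
  then show ?thesis by (simp add: power2_eq_iff_nonneg)
qed

lemma cinner_adj: "cinner x (A *v y) = cinner (madj A *v x) y"
  unfolding cinner_def madj_def matrix_vector_mult_def
  by (simp add: sum_distrib_left sum_distrib_right cnj_sum mult_ac) (rule sum.swap)

lemma madj_madj[simp]: "madj (madj A) = A"
  by (simp add: madj_def vec_eq_iff)
lemma madj_mult: "madj (A ** B) = madj B ** madj A"
  unfolding madj_def matrix_matrix_mult_def by (simp add: vec_eq_iff cnj_sum mult.commute)
lemma madj_add: "madj (A + B) = madj A + madj B"
  by (simp add: madj_def vec_eq_iff)
lemma madj_sum: "madj (\<Sum>b\<in>B. f b) = (\<Sum>b\<in>B. madj (f b))"
  by (simp add: madj_def vec_eq_iff cnj_sum)
lemma madj_id[simp]: "madj (mat 1) = mat 1"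
  by (simp add: madj_def vec_eq_iff mat_def)
lemma madj_outer: "madj (outer u v) = outer v u"
  by (simp add: madj_def outer_def vec_eq_iff mult.commute)

lemma outer_mult_vec: "outer u v *v x = cinner v x *s u"
  unfolding outer_def matrix_vector_mult_def cinner_def vector_scalar_mult_def
  by (simp add: vec_eq_iff sum_distrib_left sum_distrib_right mult_ac)

lemma sum_mult_vec: "(\<Sum>b\<in>B. f b) *v x = (\<Sum>b\<in>B. f b *v x)"
  by (induction B rule: infinite_finite_induct) (auto simp: matrix_vector_mult_add_rdistrib)

lemma cs: "cmod (cinner x y) \<le> norm x * norm y"
proof (cases "cinner x y = 0")
  case True then show ?thesis by simp
next
  case False
  define c where "c = cnj (cinner x y) / cmod (cinner x y)"
  have cm: "cmod c = 1" using False by (simp add: c_def norm_divide)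
  have e: "cnj z * z = of_real (cmod z * cmod z)" for z
    using cnj_mult_self[of z] by (simp add: power2_eq_square)
  have "cinner x (c *s y) = of_real (cmod (cinner x y))"
    using False by (simp add: cinner_scale_right c_def e)
  hence "cmod (cinner x y) = inner x (c *s y)" by (simp add: inner_cinner)
  also have "\<dots> \<le> norm x * norm (c *s y)" by (rule norm_cauchy_schwarz)
  also have "\<dots> = norm x * norm y" by (simp add: norm_scale cm)
  finally show ?thesis .
qed

definition orthonormal :: "(complex^'n) set \<Rightarrow> bool" where
  "orthonormal U \<longleftrightarrow> (\<forall>u\<in>U. \<forall>v\<in>U. cinner u v = (if u = v then 1 else 0))"

definition onb :: "(complex^'n) set \<Rightarrow> bool" where
  "onb U \<longleftrightarrow> finite U \<and> orthonormal U \<and> card U = CARD('n)"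

lemma scale_in_span:
  assumes "u \<in> V" "\<i> *s u \<in> V"
  shows "(c::complex) *s u \<in> span V"
proof -
  have "c *s u = Re c *\<^sub>R u + Im c *\<^sub>R (\<i> *s u)"
    by (simp add: vec_eq_iff complex_eq_iff scaleR_vec_def)
  then show ?thesis using assms by (simp add: span_add span_mul span_base span_scale)
qed

lemma orth_real_indep:
  assumes o: "orthonormal U"
  defines "V \<equiv> U \<union> (\<lambda>u. \<i> *s u) ` U"
  shows "independent V" and "U \<inter> (\<lambda>u. \<i> *s u) ` U = {}"
proof -
  have uu: "cinner u u = 1" if "u \<in> U" for u using o that by (simp add: orthonormal_def)
  have uv: "cinner u v = 0" if "u \<in> U" "v \<in> U" "u \<noteq> v" for u v using o that by (simp add: orthonormal_def)
  show disj: "U \<inter> (\<lambda>u. \<i> *s u) ` U = {}"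
  proof (rule ccontr)
    assume "U \<inter> (\<lambda>u. \<i> *s u) ` U \<noteq> {}"
    then obtain u v where u: "u \<in> U" "v \<in> U" "v = \<i> *s u" by blast
    have "cinner u v = \<i>" using u uu by (simp add: cinner_scale_right)
    moreover have "cinner u v = (if u = v then 1 else 0)" using o u by (simp add: orthonormal_def)
    ultimately show False by (auto split: if_splits)
  qed
  have n0: "0 \<notin> V"
  proof
    assume "0 \<in> V"
    then obtain u where "u \<in> U" "u = 0 \<or> \<i> *s u = 0" unfolding V_def by auto
    then show False using uu[of u] by auto
  qed
  have "pairwise orthogonal V"
    unfolding pairwise_def orthogonal_def V_def
  proof (intro ballI impI)
    fix a b assume a: "a \<in> U \<union> (\<lambda>u. \<i> *s u) ` U" and b: "b \<in> U \<union> (\<lambda>u. \<i> *s u) ` U" and ab: "a \<noteq> b"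
    show "a \<bullet> b = 0"
    proof (cases "a \<in> U")
      case aU: True
      show ?thesis
      proof (cases "b \<in> U")
        case True then show ?thesis using aU ab uv by (simp add: inner_cinner)
      next
        case False
        then obtain v where v: "v \<in> U" "b = \<i> *s v" using b by auto
        show ?thesis using aU v uu uv by (cases "a = v") (auto simp: inner_cinner cinner_scale_right)
      qed
    next
      case False
      then obtain u where u: "u \<in> U" "a = \<i> *s u" using a by auto
      show ?thesis
      proof (cases "b \<in> U")
        case True then show ?thesis using u uu uv by (cases "b = u") (auto simp: inner_cinner cinner_scale_left)
      next
        case False
        then obtain v where v: "v \<in> U" "b = \<i> *s v" using b by auto
        have "u \<noteq> v" using ab u v by auto
        then show ?thesis using u v uv by (simp add: inner_cinner cinner_scale_left cinner_scale_right)
      qed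
    qed
  qed
  then show "independent V" using n0 by (rule pairwise_orthogonal_independent)
qed

lemma orth_bound:
  assumes o: "orthonormal (U::(complex^'n) set)"
  shows "finite U \<and> 2 * card U \<le> 2 * CARD('n)"
proof -
  define V where "V = U \<union> (\<lambda>u. \<i> *s u) ` U"
  have ind: "independent V" using orth_real_indep(1)[OF o] by (simp add: V_def)
  from independent_bound[OF ind] have fV: "finite V" and cV: "card V \<le> DIM(complex^'n)" by auto
  have fU: "finite U" using fV by (simp add: V_def)
  have inj: "inj_on (\<lambda>u. \<i> *s u) U" by (rule inj_onI) (simp add: vec_eq_iff)
  have "card V = card U + card U"
    unfolding V_def using orth_real_indep(2)[OF o] fU
    by (simp add: card_Un_disjoint card_image[OF inj])
  then show ?thesis using cV fU by simp
qed

lemma orth_finite: "orthonormal U \<Longrightarrow> finite U" using orth_bound by blast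
lemma orth_card: "orthonormal (U::(complex^'n) set) \<Longrightarrow> card U \<le> CARD('n)" using orth_bound by fastforce

lemma perp_proj:
  assumes o: "orthonormal U" and w: "w \<in> U"
  shows "cinner w (y - (\<Sum>u\<in>U. cinner u y *s u)) = 0"
proof -
  have f: "finite U" using orth_finite[OF o] .
  have "cinner w (\<Sum>u\<in>U. cinner u y *s u) = (\<Sum>u\<in>U. cinner u y * cinner w u)"
    by (simp add: cinner_sum_right cinner_scale_right)
  also have "\<dots> = (\<Sum>u\<in>U. if u = w then cinner u y else 0)"
    using o w by (intro sum.cong) (auto simp: orthonormal_def)
  also have "\<dots> = cinner w y" using f w by simp
  finally show ?thesis by (simp add: cinner_diff_right)
qed

lemma proj_in_span:
  assumes "finite U"
  shows "(\<Sum>u\<in>U. c u *s u) \<in> span (U \<union> (\<lambda>u. \<i> *s u) ` U)"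
  by (rule span_sum) (rule scale_in_span, auto)

lemma exists_perp:
  assumes o: "orthonormal (U::(complex^'n) set)" and c: "card U < CARD('n)"
  shows "\<exists>x. norm x = 1 \<and> (\<forall>u\<in>U. cinner u x = 0)"
proof -
  define V where "V = U \<union> (\<lambda>u. \<i> *s u) ` U"
  have fU: "finite U" using orth_finite[OF o] .
  have ind: "independent V" using orth_real_indep(1)[OF o] by (simp add: V_def)
  have inj: "inj_on (\<lambda>u. \<i> *s u) U" by (rule inj_onI) (simp add: vec_eq_iff)
  have cV: "card V = 2 * card U"
    unfolding V_def using orth_real_indep(2)[OF o] fU
    by (simp add: card_Un_disjoint card_image[OF inj])
  have "span V \<noteq> UNIV"
  proof
    assume "span V = UNIV"
    then have "dim (UNIV::(complex^'n) set) \<le> card V"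
      by (metis dim_le_card dim_span independent_imp_finite ind order_refl)
    then show False using c cV by simp
  qed
  then obtain y where y: "y \<notin> span V" by blast
  define z where "z = y - (\<Sum>u\<in>U. cinner u y *s u)"
  have zp: "\<forall>u\<in>U. cinner u z = 0" using perp_proj[OF o] by (simp add: z_def)
  have "z \<noteq> 0"
  proof
    assume "z = 0"
    then have "y = (\<Sum>u\<in>U. cinner u y *s u)" by (simp add: z_def)
    then show False using y proj_in_span[OF fU] by (metis V_def)
  qed
  then have nz: "norm z > 0" by simp
  define x where "x = complex_of_real (1 / norm z) *s z"
  have "norm x = 1" using nz by (simp add: x_def norm_scale norm_divide)
  moreover have "\<forall>u\<in>U. cinner u x = 0" using zp by (simp add: x_def cinner_scale_right)
  ultimately show ?thesis by blast
qed

lemma onb_expand: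
  assumes b: "onb (U::(complex^'n) set)"
  shows "y = (\<Sum>u\<in>U. cinner u y *s u)"
proof (rule ccontr)
  assume ne: "y \<noteq> (\<Sum>u\<in>U. cinner u y *s u)"
  have o: "orthonormal U" and fU: "finite U" and cU: "card U = CARD('n)" using b by (auto simp: onb_def)
  define z where "z = y - (\<Sum>u\<in>U. cinner u y *s u)"
  have zp: "\<forall>u\<in>U. cinner u z = 0" using perp_proj[OF o] by (simp add: z_def)
  have "z \<noteq> 0" using ne by (simp add: z_def)
  then have nz: "norm z > 0" by simp
  define x where "x = complex_of_real (1 / norm z) *s z"
  have nx: "norm x = 1" using nz by (simp add: x_def norm_scale norm_divide)
  have xp: "\<forall>u\<in>U. cinner u x = 0" using zp by (simp add: x_def cinner_scale_right)
  have xx: "cinner x x = 1" using nx by (simp add: cinner_self)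
  have xU: "x \<notin> U" using xp xx by force
  have xp': "\<forall>u\<in>U. cinner x u = 0" using xp by (metis cinner_commute complex_cnj_zero)
  have "orthonormal (insert x U)"
    unfolding orthonormal_def
  proof (intro ballI)
    fix a b assume a: "a \<in> insert x U" and b: "b \<in> insert x U"
    show "cinner a b = (if a = b then 1 else 0)"
      using a b o xp xp' xx xU by (auto simp: orthonormal_def)
  qed
  from orth_card[OF this] show False using xU fU cU by simp
qed

lemma onb_sum_outer:
  assumes "onb (U::(complex^'n) set)"
  shows "(\<Sum>u\<in>U. outer u u) = mat 1"
proof -
  have "(\<Sum>u\<in>U. outer u u) *v x = mat 1 *v x" for x
    by (simp only: sum_mult_vec outer_mult_vec matrix_vector_mul_lid) (rule onb_expand[OF assms, symmetric])
  then show ?thesis by (subst matrix_eq) blast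
qed

lemma onb_parseval:
  assumes "onb (U::(complex^'n) set)"
  shows "(norm y)^2 = (\<Sum>u\<in>U. (cmod (cinner u y))^2)"
proof -
  have "cinner y y = cinner y (\<Sum>u\<in>U. cinner u y *s u)"
    using onb_expand[OF assms, of y] by simp
  also have "\<dots> = (\<Sum>u\<in>U. complex_of_real ((cmod (cinner u y))^2))"
    unfolding cinner_sum_right cinner_scale_right
  proof (rule sum.cong)
    fix u show "cinner u y * cinner y u = complex_of_real ((cmod (cinner u y))^2)"
      by (subst cinner_commute[of y u]) (rule complex_norm_square[symmetric])
  qed simp
  finally have "complex_of_real ((norm y)^2) = complex_of_real (\<Sum>u\<in>U. (cmod (cinner u y))^2)"
    by (simp add: cinner_self)
  then show ?thesis using of_real_eq_iff by blast
qed

lemma trace_onb: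
  assumes "onb (U::(complex^'n) set)"
  shows "trace A = (\<Sum>u\<in>U. cinner u (A *v u))"
proof -
  have fU: "finite U" using assms by (simp add: onb_def)
  have d: "(\<Sum>u\<in>U. u$j * cnj (u$i)) = (if j = i then 1 else 0)" for i j
  proof -
    have "(\<Sum>u\<in>U. outer u u) $ j $ i = mat 1 $ j $ i" using onb_sum_outer[OF assms] by simp
    then show ?thesis by (simp add: outer_def mat_def)
  qed
  have "(\<Sum>u\<in>U. cinner u (A *v u)) = (\<Sum>u\<in>U. \<Sum>i\<in>UNIV. \<Sum>j\<in>UNIV. A$i$j * (u$j * cnj (u$i)))"
    unfolding cinner_def matrix_vector_mult_def by (simp add: sum_distrib_left mult_ac)
  also have "\<dots> = (\<Sum>i\<in>UNIV. \<Sum>u\<in>U. \<Sum>j\<in>UNIV. A$i$j * (u$j * cnj (u$i)))"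
    by (rule sum.swap)
  also have "\<dots> = (\<Sum>i\<in>UNIV. \<Sum>j\<in>UNIV. \<Sum>u\<in>U. A$i$j * (u$j * cnj (u$i)))"
    by (rule sum.cong[OF refl], rule sum.swap)
  also have "\<dots> = (\<Sum>i\<in>UNIV. \<Sum>j\<in>UNIV. A$i$j * (\<Sum>u\<in>U. u$j * cnj (u$i)))"
    by (simp only: sum_distrib_left)
  also have "\<dots> = (\<Sum>i\<in>UNIV. A$i$i)" by (simp add: d if_distrib cong: if_cong)
  finally show ?thesis by (simp add: trace_def)
qed

lemma orth_extend:
  assumes "orthonormal (V::(complex^'n) set)"
  shows "\<exists>W. V \<subseteq> W \<and> onb W"
  using assms
proof (induction "CARD('n) - card V" arbitrary: V rule: less_induct)
  case less
  have fV: "finite V" using orth_finite[OF less.prems] .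
  show ?case
  proof (cases "card V < CARD('n)")
    case False
    then have "card V = CARD('n)" using orth_card[OF less.prems] by simp
    then show ?thesis using less.prems fV by (auto simp: onb_def)
  next
    case True
    obtain x where x: "norm x = 1" "\<forall>u\<in>V. cinner u x = 0" using exists_perp[OF less.prems True] by blast
    have xx: "cinner x x = 1" using x by (simp add: cinner_self)
    have xV: "x \<notin> V" using x xx by force
    have xp': "\<forall>u\<in>V. cinner x u = 0" using x(2) by (metis cinner_commute complex_cnj_zero)
    have o: "orthonormal (insert x V)"
      unfolding orthonormal_def
    proof (intro ballI)
      fix a b assume a: "a \<in> insert x V" and b: "b \<in> insert x V"
      show "cinner a b = (if a = b then 1 else 0)"
        using a b less.prems x xp' xx xV by (auto simp: orthonormal_def)
    qed
    have "CARD('n) - card (insert x V) < CARD('n) - card V" using xV fV True by simp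
    from less.hyps[OF this o] show ?thesis by blast
  qed
qed

definition herm :: "complex^'n^'n \<Rightarrow> bool" where "herm H \<longleftrightarrow> madj H = H"

definition csub :: "(complex^'n) set \<Rightarrow> bool" where
  "csub T \<longleftrightarrow> 0 \<in> T \<and> (\<forall>x\<in>T. \<forall>y\<in>T. x + y \<in> T) \<and> (\<forall>c. \<forall>x\<in>T. c *s x \<in> T)"

lemma scaleR_cvec: "r *\<^sub>R (x::complex^'n) = complex_of_real r *s x"
  unfolding scaleR_vec_def vector_scalar_mult_def by (simp add: scaleR_conv_of_real)

lemma csub_closed: assumes "csub T" shows "closed T"
proof -
  have "subspace T" using assms unfolding subspace_def csub_def by (simp add: scaleR_cvec)
  then show ?thesis by (rule closed_subspace)
qed

lemma herm_inner: "herm H \<Longrightarrow> cinner x (H *v y) = cinner (H *v x) y"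
  by (simp add: herm_def cinner_adj)

lemma herm_real: assumes "herm H" shows "cinner x (H *v x) = complex_of_real (Re (cinner x (H *v x)))"
proof -
  have "cinner x (H *v x) = cnj (cinner x (H *v x))"
    using herm_inner[OF assms, of x x] cinner_commute[of "H *v x" x] by simp
  then have "Im (cinner x (H *v x)) = 0" by (simp add: complex_eq_iff)
  then show ?thesis by (simp add: complex_eq_iff)
qed

lemma cont_quad: "continuous_on S (\<lambda>x::complex^'n. Re (cinner x (H *v x)))"
  unfolding cinner_def matrix_vector_mult_def
  by (simp only: vec_lambda_beta) (intro continuous_intros)

lemma eigvec:
  assumes h: "herm H" and T: "csub T" and inv: "\<forall>x\<in>T. H *v x \<in> T" and nz: "\<exists>x\<in>T. x \<noteq> 0"
  shows "\<exists>u\<in>T. norm u = 1 \<and> (\<exists>l::real. H *v u = complex_of_real l *s u)"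
proof -
  define f where "f x = Re (cinner x (H *v x))" for x
  define K where "K = T \<inter> sphere 0 1"
  have Ts: "\<And>c x. x \<in> T \<Longrightarrow> c *s x \<in> T" "\<And>x y. x \<in> T \<Longrightarrow> y \<in> T \<Longrightarrow> x + y \<in> T"
    using T by (auto simp: csub_def)
  have cK: "compact K" unfolding K_def using csub_closed[OF T] by (intro closed_Int_compact) auto
  obtain x0 where x0: "x0 \<in> T" "x0 \<noteq> 0" using nz by blast
  have "complex_of_real (1 / norm x0) *s x0 \<in> K"
    using x0 Ts by (simp add: K_def norm_scale norm_divide)
  then have neK: "K \<noteq> {}" by blast
  have cf: "continuous_on K f" unfolding f_def by (rule cont_quad)
  obtain u where uK: "u \<in> K" and umax: "\<forall>y\<in>K. f y \<le> f u"
    using continuous_attains_sup[OF cK neK cf] by blast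
  define l where "l = f u"
  have uT: "u \<in> T" and nu: "norm u = 1" using uK by (auto simp: K_def)
  have fscale: "f (complex_of_real r *s x) = r^2 * f x" for r x
    by (simp add: f_def vector_scalar_commute cinner_scale_left cinner_scale_right power2_eq_square)
  have bound: "f x \<le> l * (norm x)^2" if xT: "x \<in> T" for x
  proof (cases "x = 0")
    case True then show ?thesis by (simp add: f_def)
  next
    case False
    then have nx: "norm x > 0" by simp
    define y where "y = complex_of_real (1 / norm x) *s x"
    have "y \<in> K" using xT Ts nx by (simp add: K_def y_def norm_scale norm_divide)
    then have "f y \<le> l" using umax l_def by blast
    moreover have "f y = f x / (norm x)^2" unfolding y_def fscale by (simp add: power_divide)
    ultimately show ?thesis using nx by (simp add: divide_le_eq mult.commute)
  qed
  define g where "g x = complex_of_real l *s x - H *v x" for x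
  have g_herm: "cinner a (g b) = cinner (g a) b" for a b
    by (simp add: g_def cinner_diff_right cinner_diff_left cinner_scale_right cinner_scale_left herm_inner[OF h])
  have g_lin: "g (a + complex_of_real s *s b) = g a + complex_of_real s *s g b" for a b s
    by (simp add: g_def vector_add_ldistrib matrix_vector_right_distrib vector_scalar_commute
        vector_ssub_ldistrib vector_smult_assoc mult.commute)
  have qx: "Re (cinner x (g x)) = l * (norm x)^2 - f x" for x
    by (simp add: g_def f_def cinner_diff_right cinner_scale_right cinner_self)
  have qpos: "Re (cinner x (g x)) \<ge> 0" if "x \<in> T" for x using bound[OF that] qx[of x] by simp
  define w where "w = g u"
  have wT: "w \<in> T" unfolding w_def g_def using uT inv Ts
    by (metis add_diff_cancel_left' diff_add_cancel vector_sneg_minus1 diff_conv_add_uminus)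
  define a where "a = (norm w)^2"
  define c where "c = Re (cinner w (g w))"
  have c0: "c \<ge> 0" using qpos[OF wT] c_def by simp
  have quu: "Re (cinner u (g u)) = 0" using qx[of u] nu l_def by simp
  have key: "0 \<le> 2 * s * a + s^2 * c" for s :: real
  proof -
    have xT: "u + complex_of_real s *s w \<in> T" using uT wT Ts by blast
    have "cinner (u + complex_of_real s *s w) (g (u + complex_of_real s *s w))
        = cinner u (g u) + complex_of_real s * cinner u (g w) + complex_of_real s * cinner w (g u)
          + complex_of_real s * complex_of_real s * cinner w (g w)"
      by (simp add: g_lin cinner_add_left cinner_add_right cinner_scale_left cinner_scale_right algebra_simps)
    moreover have "cinner u (g w) = cinner w w" using g_herm[of u w] by (simp add: w_def)
    moreover have "cinner w (g u) = cinner w w" by (simp add: w_def)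
    ultimately have "Re (cinner (u + complex_of_real s *s w) (g (u + complex_of_real s *s w)))
        = 2 * s * a + s^2 * c"
      using quu by (simp add: cinner_self a_def c_def power2_eq_square)
    then show ?thesis using qpos[OF xT] by simp
  qed
  have "a = 0"
  proof (rule ccontr)
    assume an: "a \<noteq> 0"
    have a0: "a > 0" using an by (simp add: a_def)
    define s where "s = - a / (c + 1)"
    have cp: "c + 1 > 0" using c0 by simp
    have sn: "s < 0" using a0 cp by (simp add: s_def)
    have "s * c + a = a / (c + 1)" using cp by (simp add: s_def field_simps)
    moreover have "a / (c + 1) > 0" using a0 cp by simp
    ultimately have "s * c \<ge> - a" by linarith
    then have "2 * a + s * c > 0" using a0 by simp
    then have "s * (2 * a + s * c) < 0" using sn by (simp add: mult_neg_pos)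
    moreover have "0 \<le> 2 * s * a + s^2 * c" by (rule key)
    moreover have "2 * s * a + s^2 * c = s * (2 * a + s * c)" by (simp add: algebra_simps power2_eq_square)
    ultimately have "0 < (0::real)" by linarith
    then show False by simp
  qed
  then have "w = 0" by (simp add: a_def)
  then have "H *v u = complex_of_real l *s u" by (simp add: w_def g_def)
  then show ?thesis using uT nu by blast
qed

lemma common_eig:
  assumes hH: "herm H" and hK: "herm K" and com: "H ** K = K ** H"
    and T: "csub T" and invH: "\<forall>x\<in>T. H *v x \<in> T" and invK: "\<forall>x\<in>T. K *v x \<in> T"
    and nz: "\<exists>x\<in>T. x \<noteq> 0"
  shows "\<exists>u\<in>T. norm u = 1 \<and> (\<exists>a::real. H *v u = complex_of_real a *s u)
                          \<and> (\<exists>b::real. K *v u = complex_of_real b *s u)"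
proof -
  obtain u0 l where u0: "u0 \<in> T" "norm u0 = 1" "H *v u0 = complex_of_real l *s u0"
    using eigvec[OF hH T invH nz] by blast
  define E where "E = {x\<in>T. H *v x = complex_of_real l *s x}"
  have E: "csub E" using T unfolding csub_def E_def
    by (auto simp: matrix_vector_right_distrib vector_add_ldistrib vector_scalar_commute vector_smult_assoc mult.commute)
  have invE: "\<forall>x\<in>E. K *v x \<in> E"
  proof
    fix x assume x: "x \<in> E"
    have "H *v (K *v x) = K *v (H *v x)" by (simp add: matrix_vector_mul_assoc com)
    also have "\<dots> = complex_of_real l *s (K *v x)" using x by (simp add: E_def vector_scalar_commute)
    finally show "K *v x \<in> E" using x invK by (simp add: E_def)
  qed
  have nzE: "\<exists>x\<in>E. x \<noteq> 0" using u0 by (auto simp: E_def)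
  obtain u b where u: "u \<in> E" "norm u = 1" "K *v u = complex_of_real b *s u"
    using eigvec[OF hK E invE nzE] by blast
  then show ?thesis by (auto simp: E_def)
qed

definition ceig :: "complex^'n^'n \<Rightarrow> complex^'n^'n \<Rightarrow> complex^'n \<Rightarrow> bool" where
  "ceig H K u \<longleftrightarrow> (\<exists>a::real. H *v u = complex_of_real a *s u) \<and> (\<exists>b::real. K *v u = complex_of_real b *s u)"

lemma spectral2_aux:
  assumes hH: "herm H" and hK: "herm K" and com: "H ** K = K ** H"
    and o: "orthonormal (V::(complex^'n) set)" and e: "\<forall>v\<in>V. ceig H K v"
  shows "\<exists>U. V \<subseteq> U \<and> onb U \<and> (\<forall>u\<in>U. ceig H K u)"
  using o e
proof (induction "CARD('n) - card V" arbitrary: V rule: less_induct)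
  case less
  have fV: "finite V" using orth_finite[OF less.prems(1)] .
  show ?case
  proof (cases "card V < CARD('n)")
    case False
    then have "card V = CARD('n)" using orth_card[OF less.prems(1)] by simp
    then show ?thesis using less.prems fV by (auto simp: onb_def)
  next
    case True
    define T where "T = {x. \<forall>v\<in>V. cinner v x = 0}"
    have T: "csub T" unfolding csub_def T_def by (simp add: cinner_add_right cinner_scale_right)
    have inv: "\<forall>x\<in>T. M *v x \<in> T" if hM: "herm M" and eM: "\<forall>v\<in>V. \<exists>a::real. M *v v = complex_of_real a *s v" for M
    proof (intro ballI)
      fix x assume x: "x \<in> T"
      show "M *v x \<in> T" unfolding T_def
      proof (intro CollectI ballI)
        fix v assume v: "v \<in> V"
        obtain a where a: "M *v v = complex_of_real a *s v" using eM v by blast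
        have "cinner v (M *v x) = cinner (M *v v) x" by (rule herm_inner[OF hM])
        also have "\<dots> = 0" using a x v by (simp add: cinner_scale_left T_def)
        finally show "cinner v (M *v x) = 0" .
      qed
    qed
    have invH: "\<forall>x\<in>T. H *v x \<in> T" using inv[OF hH] less.prems(2) by (auto simp: ceig_def)
    have invK: "\<forall>x\<in>T. K *v x \<in> T" using inv[OF hK] less.prems(2) by (auto simp: ceig_def)
    obtain x where "norm x = 1" "\<forall>u\<in>V. cinner u x = 0" using exists_perp[OF less.prems(1) True] by blast
    then have nz: "\<exists>x\<in>T. x \<noteq> 0" by (auto simp: T_def)
    obtain u where uT: "u \<in> T" and nu: "norm u = 1" and eu: "ceig H K u"
      using common_eig[OF hH hK com T invH invK nz] by (auto simp: ceig_def)
    have xx: "cinner u u = 1" using nu by (simp add: cinner_self)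
    have xp: "\<forall>v\<in>V. cinner v u = 0" using uT by (simp add: T_def)
    have xV: "u \<notin> V" using xp xx by force
    have xp': "\<forall>v\<in>V. cinner u v = 0" using xp by (metis cinner_commute complex_cnj_zero)
    have o: "orthonormal (insert u V)"
      unfolding orthonormal_def
    proof (intro ballI)
      fix a b assume a: "a \<in> insert u V" and b: "b \<in> insert u V"
      show "cinner a b = (if a = b then 1 else 0)"
        using a b less.prems(1) xp xp' xx xV by (auto simp: orthonormal_def)
    qed
    have "CARD('n) - card (insert u V) < CARD('n) - card V" using xV fV True by simp
    from less.hyps[OF this o] less.prems(2) eu show ?thesis by blast
  qed
qed

lemma spectral2:
  assumes "herm H" "herm K" "H ** K = K ** H"
  shows "\<exists>U::(complex^'n) set. onb U \<and> (\<forall>u\<in>U. ceig H K u)"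
  using spectral2_aux[OF assms, of "{}"] by (auto simp: orthonormal_def)

lemma herm_zero: "herm (0::complex^'n^'n)" by (simp add: herm_def madj_def vec_eq_iff)

lemma spectral:
  assumes "herm H"
  shows "\<exists>U::(complex^'n) set. onb U \<and> (\<forall>u\<in>U. \<exists>a::real. H *v u = complex_of_real a *s u)"
  using spectral2[OF assms herm_zero] by (auto simp: ceig_def)

lemma mv_sum: "A *v (\<Sum>b\<in>B. f b) = (\<Sum>b\<in>B. A *v f b)"
  by (induction B rule: infinite_finite_induct) (auto simp: matrix_vector_right_distrib)

lemma cinner_eq_imp: assumes "\<forall>y. cinner a y = cinner b y" shows "a = b"
proof -
  have "cinner (a - b) (a - b) = 0" using assms by (simp add: cinner_diff_left)
  then show ?thesis by (simp add: cinner_self)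
qed

lemma psd_herm: assumes "psd Q" shows "herm Q"
proof -
  define B where "B x y = cinner x (Q *v y)" for x y
  have r: "Im (B x x) = 0" for x using assms by (simp add: psd_def B_def)
  have Bl: "B (x + y) z = B x z + B y z" "B x (y + z) = B x y + B x z" for x y z
    by (simp_all add: B_def cinner_add_left cinner_add_right matrix_vector_right_distrib)
  have Bs: "B x (c *s y) = c * B x y" "B (c *s x) y = cnj c * B x y" for x y c
    by (simp_all add: B_def cinner_scale_left cinner_scale_right vector_scalar_commute)
  have sym: "B x y = cnj (B y x)" for x y
  proof -
    have "Im (B (x + y) (x + y)) = 0" by (rule r)
    then have i1: "Im (B x y + B y x) = 0" using r[of x] r[of y] by (simp add: Bl)
    have "Im (B (x + \<i> *s y) (x + \<i> *s y)) = 0" by (rule r)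
    then have "Im (\<i> * B x y - \<i> * B y x) = 0" using r[of x] r[of y] by (simp add: Bl Bs)
    then have i2: "Re (B x y) = Re (B y x)" by simp
    show ?thesis using i1 i2 by (simp add: complex_eq_iff)
  qed
  have "madj Q *v x = Q *v x" for x
  proof (rule cinner_eq_imp, rule allI)
    fix y
    have "cinner (madj Q *v x) y = cinner x (Q *v y)" by (simp add: cinner_adj)
    also have "\<dots> = cnj (cinner y (Q *v x))" using sym[of x y] by (simp add: B_def)
    also have "\<dots> = cinner (Q *v x) y" by (simp add: cinner_commute[of "Q *v x" y])
    finally show "cinner (madj Q *v x) y = cinner (Q *v x) y" .
  qed
  then show ?thesis by (simp add: herm_def matrix_eq)
qed

lemma cinner_neg_right: "cinner x (- y) = - cinner x y"
  by (simp add: cinner_def sum_negf)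

lemma onb_matrix_eq:
  assumes U: "onb U" and e: "\<forall>u\<in>U. A *v u = B *v u"
  shows "A = B"
proof -
  have "A *v x = B *v x" for x
  proof -
    have "A *v x = (\<Sum>u\<in>U. cinner u x *s (A *v u))"
      by (subst onb_expand[OF U, of x]) (simp add: mv_sum vector_scalar_commute)
    also have "\<dots> = (\<Sum>u\<in>U. cinner u x *s (B *v u))" using e by simp
    also have "\<dots> = B *v x"
      by (subst (2) onb_expand[OF U, of x]) (simp add: mv_sum vector_scalar_commute)
    finally show ?thesis .
  qed
  then show ?thesis by (simp add: matrix_eq)
qed

lemma onb_orth: "onb U \<Longrightarrow> u \<in> U \<Longrightarrow> v \<in> U \<Longrightarrow> cinner u v = (if u = v then 1 else 0)"
  by (simp add: onb_def orthonormal_def)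

lemma sqrt_on_basis:
  assumes Q: "psd Q" and QQ: "Q ** Q = M"
    and Mu: "M *v u = complex_of_real (s^2) *s u" and s: "s \<ge> 0"
  shows "Q *v u = complex_of_real s *s u"
proof -
  have h: "herm Q" using psd_herm[OF Q] .
  define y where "y = Q *v u - complex_of_real s *s u"
  have Qy: "Q *v y = - (complex_of_real s *s y)"
  proof -
    have "Q *v (Q *v u) = complex_of_real (s^2) *s u"
      using Mu QQ by (simp add: matrix_vector_mul_assoc)
    then show ?thesis
      by (simp add: y_def matrix_vector_mult_diff_distrib vector_scalar_commute vector_ssub_ldistrib
          vector_smult_assoc power2_eq_square)
  qed
  show ?thesis
  proof (cases "s = 0")
    case True
    then have "Q *v (Q *v u) = 0" using Qy by (simp add: y_def)
    then have "cinner (Q *v u) (Q *v u) = 0" using herm_inner[OF h, of u "Q *v u"] by simp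
    then show ?thesis using True by (simp add: cinner_self)
  next
    case False
    then have sp: "s > 0" using s by simp
    have "cinner y (Q *v y) = - (complex_of_real s * cinner y y)" using Qy
      by (simp add: cinner_scale_right cinner_neg_right)
    then have "Re (cinner y (Q *v y)) = - s * (norm y)^2" by (simp add: cinner_self)
    moreover have "Re (cinner y (Q *v y)) \<ge> 0" using Q by (simp add: psd_def)
    ultimately have "s * (norm y)^2 \<le> 0" by simp
    then have "(norm y)^2 \<le> 0" using sp by (simp add: mult_le_0_iff)
    then have "y = 0" by simp
    then show ?thesis by (simp add: y_def)
  qed
qed

lemma svd:
  fixes X :: "complex^'n^'n"
  shows "\<exists>U. onb U \<and> (\<forall>u\<in>U. \<forall>v\<in>U. u \<noteq> v \<longrightarrow> cinner (X *v u) (X *v v) = 0)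
            \<and> trace_norm X = (\<Sum>u\<in>U. norm (X *v u))"
proof -
  define M where "M = madj X ** X"
  have hM: "herm M" by (simp add: herm_def M_def madj_mult)
  obtain U where U: "onb U" and eU: "\<forall>u\<in>U. \<exists>a::real. M *v u = complex_of_real a *s u"
    using spectral[OF hM] by blast
  have fU: "finite U" using U by (simp add: onb_def)
  define sg where "sg u = norm (X *v u)" for u
  have Mxx: "cinner v (M *v u) = cinner (X *v v) (X *v u)" for u v
    by (simp add: M_def cinner_adj matrix_vector_mul_assoc[symmetric])
  have Mu: "M *v u = complex_of_real ((sg u)^2) *s u" if u: "u \<in> U" for u
  proof -
    obtain a where a: "M *v u = complex_of_real a *s u" using eU u by blast
    have "cinner u (M *v u) = complex_of_real a" using a onb_orth[OF U u u] by (simp add: cinner_scale_right)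
    moreover have "cinner u (M *v u) = complex_of_real ((sg u)^2)" by (simp add: Mxx cinner_self sg_def)
    ultimately show ?thesis using a by simp
  qed
  have orthX: "cinner (X *v v) (X *v u) = 0" if "u \<in> U" "v \<in> U" "u \<noteq> v" for u v
  proof -
    have "cinner (X *v v) (X *v u) = cinner v (M *v u)" by (simp add: Mxx)
    also have "\<dots> = 0" using Mu[OF that(1)] onb_orth[OF U that(2) that(1)] that by (simp add: cinner_scale_right)
    finally show ?thesis .
  qed
  define P where "P = (\<Sum>u\<in>U. outer (complex_of_real (sg u) *s u) u)"
  have Px: "P *v x = (\<Sum>u\<in>U. cinner u x *s (complex_of_real (sg u) *s u))" for x
    by (simp add: P_def sum_mult_vec outer_mult_vec)
  have Pu: "P *v u = complex_of_real (sg u) *s u" if u: "u \<in> U" for u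
  proof -
    have "P *v u = (\<Sum>v\<in>U. if v = u then complex_of_real (sg u) *s u else 0)"
      unfolding Px using U u by (intro sum.cong) (auto simp: onb_orth)
    also have "\<dots> = complex_of_real (sg u) *s u" using fU u by simp
    finally show ?thesis .
  qed
  have eqU: "Q *v x = P *v x" if "\<forall>u\<in>U. Q *v u = complex_of_real (sg u) *s u" for Q x
  proof -
    have "Q *v x = Q *v (\<Sum>u\<in>U. cinner u x *s u)" using onb_expand[OF U, of x] by simp
    also have "\<dots> = (\<Sum>u\<in>U. cinner u x *s (complex_of_real (sg u) *s u))"
      using that by (simp add: mv_sum vector_scalar_commute)
    finally show ?thesis by (simp add: Px)
  qed
  have Ppsd: "psd P"
    unfolding psd_def
  proof
    fix x
    have "cinner x (P *v x) = (\<Sum>u\<in>U. complex_of_real (sg u * (cmod (cinner u x))^2))"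
      unfolding Px cinner_sum_right cinner_scale_right
    proof (rule sum.cong)
      fix u show "cinner u x * (complex_of_real (sg u) * cinner x u) = complex_of_real (sg u * (cmod (cinner u x))^2)"
        using complex_norm_square[of "cinner u x"] cinner_commute[of x u] by (simp add: mult_ac)
    qed simp
    also have "\<dots> = complex_of_real (\<Sum>u\<in>U. sg u * (cmod (cinner u x))^2)" by simp
    finally show "Im (cinner x (P *v x)) = 0 \<and> 0 \<le> Re (cinner x (P *v x))"
      by (simp add: sg_def sum_nonneg)
  qed
  have PP: "P ** P = M"
    by (rule onb_matrix_eq[OF U])
      (simp add: Mu matrix_vector_mul_assoc[symmetric] Pu vector_scalar_commute vector_smult_assoc power2_eq_square)
  have uniq: "Q = P" if "psd Q \<and> Q ** Q = madj X ** X" for Q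
  proof -
    have "\<forall>u\<in>U. Q *v u = complex_of_real (sg u) *s u"
      using that Mu sqrt_on_basis[of Q M] by (auto simp: M_def sg_def)
    then have "\<forall>u\<in>U. Q *v u = P *v u"
    proof (intro ballI)
      fix u assume "\<forall>u\<in>U. Q *v u = complex_of_real (sg u) *s u" "u \<in> U"
      then show "Q *v u = P *v u" using Pu[of u] by simp
    qed
    then show ?thesis by (rule onb_matrix_eq[OF U])
  qed
  have mabs: "mabs X = P" unfolding mabs_def
  proof (rule the_equality)
    show "psd P \<and> P ** P = madj X ** X" using Ppsd PP unfolding M_def by blast
    show "Q = P" if "psd Q \<and> Q ** Q = madj X ** X" for Q using that by (rule uniq)
  qed
  have "trace P = (\<Sum>u\<in>U. complex_of_real (sg u))"
    unfolding trace_onb[OF U]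
    by (rule sum.cong) (auto simp: Pu cinner_scale_right onb_orth[OF U])
  then have "trace_norm X = (\<Sum>u\<in>U. sg u)" by (simp add: trace_norm_def mabs)
  then show ?thesis using U orthX by (auto simp: sg_def)
qed

lemma trace_WX: "onb U \<Longrightarrow> trace (W ** X) = (\<Sum>u\<in>U. cinner (madj W *v u) (X *v u))"
  by (simp add: trace_onb cinner_adj matrix_vector_mul_assoc[symmetric])

lemma tn_nonneg: "trace_norm X \<ge> 0"
  using svd[of X] by (auto intro!: sum_nonneg)

lemma unit_of_onb: assumes "onb U" "u \<in> U" shows "norm u = 1"
proof -
  have "complex_of_real ((norm u)^2) = 1" using onb_orth[OF assms assms(2)] cinner_self[of u] by simp
  then have "(norm u)^2 = 1" by (metis of_real_eq_1_iff)
  then show ?thesis using norm_ge_zero[of u] by (smt (verit) power2_eq_1_iff)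
qed

lemma trace_upper:
  assumes c: "\<forall>y. norm (madj W *v y) \<le> norm y"
  shows "cmod (trace (W ** X)) \<le> trace_norm X"
proof -
  obtain U where U: "onb U" and tn: "trace_norm X = (\<Sum>u\<in>U. norm (X *v u))" using svd[of X] by blast
  have "cmod (trace (W ** X)) \<le> (\<Sum>u\<in>U. cmod (cinner (madj W *v u) (X *v u)))"
    unfolding trace_WX[OF U] by (rule norm_sum)
  also have "\<dots> \<le> (\<Sum>u\<in>U. norm (X *v u))"
  proof (rule sum_mono)
    fix u assume u: "u \<in> U"
    have nu: "norm u = 1" using unit_of_onb[OF U u] .
    have a: "cmod (cinner (madj W *v u) (X *v u)) \<le> norm (madj W *v u) * norm (X *v u)" by (rule cs)
    have "norm (madj W *v u) \<le> 1" using c nu by metis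
    then have "norm (madj W *v u) * norm (X *v u) \<le> 1 * norm (X *v u)" by (intro mult_right_mono) auto
    then show "cmod (cinner (madj W *v u) (X *v u)) \<le> norm (X *v u)" using a by simp
  qed
  finally show ?thesis using tn by simp
qed


lemma trace_attain:
  fixes X :: "complex^'n^'n"
  shows "\<exists>W. madj W ** W = mat 1 \<and> W ** madj W = mat 1 \<and> trace (W ** X) = complex_of_real (trace_norm X)"
proof -
  obtain U where U: "onb U" and orthX: "\<forall>u\<in>U. \<forall>v\<in>U. u \<noteq> v \<longrightarrow> cinner (X *v u) (X *v v) = 0"
    and tn: "trace_norm X = (\<Sum>u\<in>U. norm (X *v u))" using svd[of X] by blast
  have fU: "finite U" using U by (simp add: onb_def)
  define Up where "Up = {u\<in>U. X *v u \<noteq> 0}"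
  define v where "v u = complex_of_real (1 / norm (X *v u)) *s (X *v u)" for u
  have vv: "cinner (v a) (v b) = (if a = b then 1 else 0)" if "a \<in> Up" "b \<in> Up" for a b
  proof (cases "a = b")
    case True
    have "norm (v a) = 1" using that by (simp add: v_def norm_scale norm_divide Up_def)
    then show ?thesis using True by (simp add: cinner_self)
  next
    case False
    then show ?thesis using that orthX by (simp add: v_def cinner_scale_left cinner_scale_right Up_def)
  qed
  have injv: "inj_on v Up"
  proof (rule inj_onI)
    fix a b assume "a \<in> Up" "b \<in> Up" "v a = v b"
    then show "a = b" using vv[of a b] vv[of a a] by (auto split: if_splits)
  qed
  have oV: "orthonormal (v ` Up)" unfolding orthonormal_def
    using vv injv by (auto simp: inj_on_eq_iff)
  obtain Vf where VfV: "v ` Up \<subseteq> Vf" and Vf: "onb Vf" using orth_extend[OF oV] by blast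
  have fVf: "finite Vf" using Vf by (simp add: onb_def)
  have fUp: "finite Up" using fU by (simp add: Up_def)
  have cUp: "card (v ` Up) = card Up" using card_image[OF injv] .
  have UpU: "Up \<subseteq> U" by (auto simp: Up_def)
  have "card (U - Up) = card (Vf - v ` Up)"
    using U Vf VfV UpU fU fUp cUp by (simp add: card_Diff_subset onb_def finite_subset)
  then obtain g where g: "bij_betw g (U - Up) (Vf - v ` Up)"
    using finite_same_card_bij[of "U - Up" "Vf - v ` Up"] fU fVf by auto
  define t where "t u = (if u \<in> Up then v u else g u)" for u
  have bt: "bij_betw t U Vf"
  proof -
    have b1: "bij_betw t Up (v ` Up)"
      using injv by (simp add: bij_betw_def t_def inj_on_def image_def)
    have b2: "bij_betw t (U - Up) (Vf - v ` Up)"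
      using g by (rule bij_betw_cong[THEN iffD1, rotated]) (simp add: t_def)
    have "bij_betw t (Up \<union> (U - Up)) (v ` Up \<union> (Vf - v ` Up))"
      by (rule bij_betw_combine[OF b1 b2]) simp
    moreover have "Up \<union> (U - Up) = U" "v ` Up \<union> (Vf - v ` Up) = Vf" using UpU VfV by auto
    ultimately show ?thesis by simp
  qed
  have tt: "cinner (t a) (t b) = (if a = b then 1 else 0)" if "a \<in> U" "b \<in> U" for a b
  proof -
    have "t a \<in> Vf" "t b \<in> Vf" using bt that by (auto simp: bij_betw_def)
    moreover have "t a = t b \<longleftrightarrow> a = b" using bt that by (auto simp: bij_betw_def inj_on_eq_iff)
    ultimately show ?thesis using onb_orth[OF Vf] by metis
  qed
  define Ws where "Ws = (\<Sum>u\<in>U. outer (t u) u)"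
  define W where "W = madj Ws"
  have Wsx: "Ws *v x = (\<Sum>u\<in>U. cinner u x *s t u)" for x by (simp add: Ws_def sum_mult_vec outer_mult_vec)
  have Wx: "W *v x = (\<Sum>u\<in>U. cinner (t u) x *s u)" for x
    by (simp add: W_def Ws_def madj_sum madj_outer sum_mult_vec outer_mult_vec)
  have Wsu: "Ws *v u = t u" if "u \<in> U" for u
  proof -
    have "Ws *v u = (\<Sum>w\<in>U. if w = u then t u else 0)" unfolding Wsx
      using that by (intro sum.cong) (auto simp: onb_orth[OF U])
    then show ?thesis using fU that by simp
  qed
  have Wt: "W *v t u = u" if "u \<in> U" for u
  proof -
    have "W *v t u = (\<Sum>w\<in>U. if w = u then u else 0)" unfolding Wx
      using that by (intro sum.cong) (auto simp: tt)
    then show ?thesis using fU that by simp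
  qed
  have mW: "madj W = Ws" by (simp add: W_def)
  have WsW: "madj W ** W = mat 1"
  proof (rule onb_matrix_eq[OF Vf], intro ballI)
    fix y assume "y \<in> Vf"
    then obtain u where u: "u \<in> U" "y = t u" using bt by (auto simp: bij_betw_def)
    show "(madj W ** W) *v y = mat 1 *v y"
      by (simp only: matrix_vector_mul_assoc[symmetric] u(2) Wt[OF u(1)] mW Wsu[OF u(1)] matrix_vector_mul_lid)
  qed
  have WWs: "W ** madj W = mat 1"
  proof (rule onb_matrix_eq[OF U], intro ballI)
    fix u assume u: "u \<in> U"
    show "(W ** madj W) *v u = mat 1 *v u"
      by (simp only: matrix_vector_mul_assoc[symmetric] mW Wsu[OF u] Wt[OF u] matrix_vector_mul_lid)
  qed
  have "trace (W ** X) = (\<Sum>u\<in>U. cinner (t u) (X *v u))"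
    unfolding trace_WX[OF U] by (rule sum.cong) (simp_all add: W_def Wsu)
  also have "\<dots> = (\<Sum>u\<in>U. complex_of_real (norm (X *v u)))"
  proof (rule sum.cong)
    fix u assume u: "u \<in> U"
    show "cinner (t u) (X *v u) = complex_of_real (norm (X *v u))"
    proof (cases "u \<in> Up")
      case True
      then show ?thesis
        by (simp add: t_def v_def cinner_scale_left cinner_self Up_def power2_eq_square)
    next
      case False
      then have "X *v u = 0" using u by (simp add: Up_def)
      then show ?thesis by simp
    qed
  qed simp
  finally show ?thesis using WsW WWs tn by auto
qed

lemma unitary_contr:
  assumes "W ** madj W = mat 1"
  shows "\<forall>y. norm (madj W *v y) \<le> norm y"
proof
  fix y
  have "cinner (madj W *v y) (madj W *v y) = cinner y (W *v (madj W *v y))"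
    by (simp add: cinner_adj)
  also have "\<dots> = cinner y y" using assms by (simp add: matrix_vector_mul_assoc)
  finally have "complex_of_real ((norm (madj W *v y))^2) = complex_of_real ((norm y)^2)" by (simp add: cinner_self)
  then have "(norm (madj W *v y))^2 = (norm y)^2" using of_real_eq_iff by blast
  then show "norm (madj W *v y) \<le> norm y" by (simp add: power2_eq_iff_nonneg)
qed

lemma tn_char:
  fixes X :: "complex^'n^'n"
  shows "\<exists>W. (\<forall>y. norm (madj W *v y) \<le> norm y) \<and> trace (W ** X) = complex_of_real (trace_norm X)"
  using trace_attain[of X] unitary_contr by blast

lemma trace_mscale: "trace (W ** mscale c A) = c * trace (W ** A)"
  by (simp add: trace_def matrix_matrix_mult_def mscale_def sum_distrib_left mult_ac)

lemma tn_zero_iff: "trace_norm (A::complex^'n^'n) = 0 \<longleftrightarrow> A = 0"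
proof -
  obtain U where U: "onb U" and tn: "trace_norm A = (\<Sum>u\<in>U. norm (A *v u))" using svd[of A] by blast
  have fU: "finite U" using U by (simp add: onb_def)
  show ?thesis
  proof
    assume "trace_norm A = 0"
    then have "\<forall>u\<in>U. norm (A *v u) = 0" using tn fU by (simp add: sum_nonneg_eq_0_iff)
    then have "\<forall>u\<in>U. A *v u = 0 *v u" by simp
    then show "A = 0" by (rule onb_matrix_eq[OF U])
  next
    assume "A = 0" then show "trace_norm A = 0" using tn by simp
  qed
qed

lemma tn_scale: "trace_norm (mscale c A) = cmod c * trace_norm (A::complex^'n^'n)"
proof (rule antisym)
  obtain W where W: "\<forall>y. norm (madj W *v y) \<le> norm y"
    and t: "trace (W ** mscale c A) = complex_of_real (trace_norm (mscale c A))" using tn_char by blast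
  have "trace_norm (mscale c A) = cmod (trace (W ** mscale c A))" using t tn_nonneg[of "mscale c A"] by simp
  also have "\<dots> = cmod c * cmod (trace (W ** A))" by (simp add: trace_mscale norm_mult)
  also have "\<dots> \<le> cmod c * trace_norm A" using trace_upper[OF W] by (simp add: mult_left_mono)
  finally show "trace_norm (mscale c A) \<le> cmod c * trace_norm A" .
next
  obtain W where W: "\<forall>y. norm (madj W *v y) \<le> norm y"
    and t: "trace (W ** A) = complex_of_real (trace_norm A)" using tn_char by blast
  have "cmod c * trace_norm A = cmod c * cmod (trace (W ** A))" using t tn_nonneg[of A] by simp
  also have "\<dots> = cmod (trace (W ** mscale c A))" by (simp add: trace_mscale norm_mult)
  also have "\<dots> \<le> trace_norm (mscale c A)" using trace_upper[OF W] by simp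
  finally show "cmod c * trace_norm A \<le> trace_norm (mscale c A)" .
qed

lemma tn_triangle: "trace_norm (A + B) \<le> trace_norm A + trace_norm (B::complex^'n^'n)"
proof -
  obtain W where W: "\<forall>y. norm (madj W *v y) \<le> norm y"
    and t: "trace (W ** (A + B)) = complex_of_real (trace_norm (A + B))" using tn_char by blast
  have "complex_of_real (trace_norm (A + B)) = trace (W ** A) + trace (W ** B)"
    using t by (simp add: matrix_add_ldistrib trace_add)
  then have "Re (complex_of_real (trace_norm (A + B))) = Re (trace (W ** A) + trace (W ** B))" by simp
  then have "trace_norm (A + B) = Re (trace (W ** A)) + Re (trace (W ** B))" by simp
  also have "\<dots> \<le> cmod (trace (W ** A)) + cmod (trace (W ** B))"
    by (intro add_mono complex_Re_le_cmod)
  also have "\<dots> \<le> trace_norm A + trace_norm B" using trace_upper[OF W] by (intro add_mono)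
  finally show ?thesis .
qed

lemma tn_matrix_norm: "is_matrix_norm (trace_norm :: complex^'n^'n \<Rightarrow> real)"
  unfolding is_matrix_norm_def using tn_nonneg tn_zero_iff tn_scale tn_triangle by blast

lemma quad_le_tn:
  assumes x: "norm x = 1"
  shows "cmod (cinner x (A *v x)) \<le> trace_norm A"
proof -
  obtain U where U: "onb U" and tn: "trace_norm A = (\<Sum>u\<in>U. norm (A *v u))" using svd[of A] by blast
  have "A *v x = (\<Sum>u\<in>U. cinner u x *s (A *v u))"
    by (subst onb_expand[OF U, of x]) (simp add: mv_sum vector_scalar_commute)
  then have "cinner x (A *v x) = (\<Sum>u\<in>U. cinner u x * cinner x (A *v u))"
    by (simp add: cinner_sum_right cinner_scale_right)
  then have "cmod (cinner x (A *v x)) \<le> (\<Sum>u\<in>U. cmod (cinner u x * cinner x (A *v u)))"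
    by (simp add: norm_sum)
  also have "\<dots> \<le> (\<Sum>u\<in>U. norm (A *v u))"
  proof (rule sum_mono)
    fix u assume u: "u \<in> U"
    have a: "cmod (cinner u x) \<le> 1" using cs[of u x] unit_of_onb[OF U u] x by simp
    have b: "cmod (cinner x (A *v u)) \<le> norm (A *v u)" using cs[of x "A *v u"] x by simp
    show "cmod (cinner u x * cinner x (A *v u)) \<le> norm (A *v u)"
    proof -
      have "cmod (cinner u x) * cmod (cinner x (A *v u)) \<le> 1 * norm (A *v u)"
        by (rule mult_mono) (use a b in auto)
      then show ?thesis by (simp add: norm_mult)
    qed
  qed
  finally show ?thesis using tn by simp
qed

lemma unit_exists: "\<exists>x::complex^'n. norm x = 1"
proof -
  obtain U :: "(complex^'n) set" where U: "onb U" using spectral[OF herm_zero] by blast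
  have "card U > 0" using U by (simp add: onb_def)
  then obtain u where "u \<in> U" by (metis card_gt_0_iff ex_in_conv)
  then show ?thesis using unit_of_onb[OF U] by blast
qed

lemma nr_le_tn: "numerical_radius A \<le> trace_norm A"
  unfolding numerical_radius_def
  by (rule cSUP_least) (use unit_exists quad_le_tn in auto)

lemma bdd_nr: "bdd_above ((\<lambda>x. cmod (cinner x (A *v x))) ` {x. norm x = 1})"
  by (rule bdd_aboveI[where M = "trace_norm A"]) (auto intro: quad_le_tn)

lemma nr_ge: "norm x = 1 \<Longrightarrow> cmod (cinner x (A *v x)) \<le> numerical_radius A"
  unfolding numerical_radius_def by (rule cSUP_upper[OF _ bdd_nr]) simp

lemma frame_norm:
  assumes C: "(\<Sum>i<k. madj (C i) ** C i) = mat 1"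
  shows "(\<Sum>i<k. (norm (C i *v y))^2) = (norm y)^2"
proof -
  have "complex_of_real (\<Sum>i<k. (norm (C i *v y))^2) = (\<Sum>i<k. cinner (C i *v y) (C i *v y))"
    by (simp add: cinner_self)
  also have "\<dots> = (\<Sum>i<k. cinner y ((madj (C i) ** C i) *v y))"
    by (simp add: cinner_adj matrix_vector_mul_assoc[symmetric])
  also have "\<dots> = cinner y ((\<Sum>i<k. madj (C i) ** C i) *v y)"
    by (simp add: sum_mult_vec cinner_sum_right)
  also have "\<dots> = complex_of_real ((norm y)^2)" using C by (simp add: cinner_self)
  finally show ?thesis using of_real_eq_iff by blast
qed

lemma amgm: fixes a b s :: real assumes "s > 0" shows "a * b \<le> (s * a^2 + b^2 / s) / 2" (is "_ \<le> ?r")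
proof -
  have "0 \<le> (s * a - b)^2" by simp
  then have "2 * s * (a * b) \<le> s^2 * a^2 + b^2" by (simp add: power2_eq_square algebra_simps)
  moreover have "s^2 * a^2 + b^2 = 2 * s * ?r" using assms by (simp add: field_simps power2_eq_square)
  ultimately have "2 * s * (a * b) \<le> 2 * s * ?r" by simp
  then show ?thesis using assms by simp
qed

lemma pair_bound:
  assumes C: "(\<Sum>i<k. madj (C i) ** C i) = mat 1" and u: "norm u = 1"
  shows "(\<Sum>i<k. norm (C i *v u) * norm (C i *v (X *v u))) \<le> norm (X *v u)"
proof (cases "X *v u = 0")
  case True then show ?thesis by simp
next
  case False
  define s where "s = norm (X *v u)"
  have sp: "s > 0" using False by (simp add: s_def)
  have "(\<Sum>i<k. norm (C i *v u) * norm (C i *v (X *v u)))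
      \<le> (\<Sum>i<k. (s * (norm (C i *v u))^2 + (norm (C i *v (X *v u)))^2 / s) / 2)"
    by (rule sum_mono) (rule amgm[OF sp])
  also have "\<dots> = (s * (\<Sum>i<k. (norm (C i *v u))^2) + (\<Sum>i<k. (norm (C i *v (X *v u)))^2) / s) / 2"
    by (simp only: sum_divide_distrib[symmetric] sum.distrib sum_distrib_left)
  also have "\<dots> = s"
  proof -
    have f1: "(\<Sum>i<k. (norm (C i *v u))^2) = 1" using frame_norm[OF C, of u] u by simp
    have f2: "(\<Sum>i<k. (norm (C i *v (X *v u)))^2) = s^2" using frame_norm[OF C, of "X *v u"] by (simp add: s_def)
    show ?thesis unfolding f1 f2 using sp by (simp add: power2_eq_square)
  qed
  finally show ?thesis by (simp add: s_def)
qed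

lemma tn_L: "is_L_norm (trace_norm :: complex^'n^'n \<Rightarrow> real)"
  unfolding is_L_norm_def
proof (intro conjI tn_matrix_norm allI impI)
  fix k :: nat and C :: "nat \<Rightarrow> complex^'n^'n" and X :: "complex^'n^'n"
  assume C: "(\<Sum>i<k. madj (C i) ** C i) = mat 1"
  have "\<forall>i. \<exists>W. (\<forall>y. norm (madj W *v y) \<le> norm y) \<and>
      trace (W ** (C i ** X ** madj (C i))) = complex_of_real (trace_norm (C i ** X ** madj (C i)))"
    using tn_char by blast
  from choice[OF this] obtain W where Wall: "\<forall>i. (\<forall>y. norm (madj (W i) *v y) \<le> norm y) \<and>
      trace (W i ** (C i ** X ** madj (C i))) = complex_of_real (trace_norm (C i ** X ** madj (C i)))"
    by blast
  have W: "\<And>i. \<forall>y. norm (madj (W i) *v y) \<le> norm y" using Wall by blast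
  have tW: "\<And>i. trace (W i ** (C i ** X ** madj (C i))) = complex_of_real (trace_norm (C i ** X ** madj (C i)))"
    using Wall by blast
  obtain U where U: "onb U" and tn: "trace_norm X = (\<Sum>u\<in>U. norm (X *v u))" using svd[of X] by blast
  have tr: "trace (W i ** (C i ** X ** madj (C i)))
      = (\<Sum>u\<in>U. cinner (madj (W i) *v (C i *v u)) (C i *v (X *v u)))" for i
  proof -
    have "trace (W i ** (C i ** X ** madj (C i))) = trace ((W i ** (C i ** X)) ** madj (C i))"
      by (simp only: matrix_mul_assoc)
    also have "\<dots> = trace (madj (C i) ** (W i ** (C i ** X)))" by (rule trace_mul_sym)
    also have "\<dots> = trace ((madj (C i) ** W i ** C i) ** X)" by (simp only: matrix_mul_assoc)
    also have "\<dots> = (\<Sum>u\<in>U. cinner (madj (madj (C i) ** W i ** C i) *v u) (X *v u))"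
      by (rule trace_WX[OF U])
    also have "\<dots> = (\<Sum>u\<in>U. cinner (madj (W i) *v (C i *v u)) (C i *v (X *v u)))"
    proof (rule sum.cong[OF refl])
      fix u
      have "madj (madj (C i) ** W i ** C i) = madj (C i) ** madj (W i) ** C i"
        by (simp only: madj_mult madj_madj matrix_mul_assoc)
      then have "madj (madj (C i) ** W i ** C i) *v u = madj (C i) *v (madj (W i) *v (C i *v u))"
        by (simp only: matrix_vector_mul_assoc matrix_mul_assoc)
      then show "cinner (madj (madj (C i) ** W i ** C i) *v u) (X *v u)
          = cinner (madj (W i) *v (C i *v u)) (C i *v (X *v u))"
        by (simp only: cinner_adj[of _ "C i" "X *v u", symmetric])
    qed
    finally show ?thesis .
  qed
  have "(\<Sum>i<k. trace_norm (C i ** X ** madj (C i)))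
      = Re (\<Sum>i<k. trace (W i ** (C i ** X ** madj (C i))))" by (simp add: tW)
  also have "\<dots> \<le> cmod (\<Sum>i<k. trace (W i ** (C i ** X ** madj (C i))))" by (rule complex_Re_le_cmod)
  also have "\<dots> = cmod (\<Sum>u\<in>U. \<Sum>i<k. cinner (madj (W i) *v (C i *v u)) (C i *v (X *v u)))"
    by (simp only: tr) (rule arg_cong[where f=cmod], rule sum.swap)
  also have "\<dots> \<le> (\<Sum>u\<in>U. \<Sum>i<k. cmod (cinner (madj (W i) *v (C i *v u)) (C i *v (X *v u))))"
    by (rule order_trans[OF norm_sum], rule sum_mono, rule norm_sum)
  also have "\<dots> \<le> (\<Sum>u\<in>U. \<Sum>i<k. norm (C i *v u) * norm (C i *v (X *v u)))"
  proof (intro sum_mono)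
    fix u i
    have "cmod (cinner (madj (W i) *v (C i *v u)) (C i *v (X *v u)))
        \<le> norm (madj (W i) *v (C i *v u)) * norm (C i *v (X *v u))" by (rule cs)
    also have "\<dots> \<le> norm (C i *v u) * norm (C i *v (X *v u))"
      using W[of i] by (intro mult_right_mono) auto
    finally show "cmod (cinner (madj (W i) *v (C i *v u)) (C i *v (X *v u)))
        \<le> norm (C i *v u) * norm (C i *v (X *v u))" .
  qed
  also have "\<dots> \<le> (\<Sum>u\<in>U. norm (X *v u))"
    by (rule sum_mono) (rule pair_bound[OF C unit_of_onb[OF U]])
  finally show "(\<Sum>i<k. trace_norm (C i ** X ** madj (C i))) \<le> trace_norm X" using tn by simp
qed

lemma mscale_mv: "mscale c A *v x = c *s (A *v x)"
  unfolding mscale_def matrix_vector_mult_def vector_scalar_mult_def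
  by (simp add: vec_eq_iff sum_distrib_left mult.assoc)

lemma outer_sq: "cinner u u = 1 \<Longrightarrow> madj (outer u u) ** outer u u = outer u u"
  by (subst matrix_eq) (simp add: madj_outer matrix_vector_mul_assoc[symmetric] outer_mult_vec cinner_scale_right)

lemma outer_X_outer: "outer u u ** X ** madj (outer u u) = mscale (cinner u (X *v u)) (outer u u)"
  by (subst matrix_eq)
     (simp add: madj_outer matrix_vector_mul_assoc[symmetric] outer_mult_vec mscale_mv
       cinner_scale_right vector_scalar_commute vector_smult_assoc mult.commute)

lemma ceq: assumes "P + Q = A" "\<i> * (Q - P) = (B::complex)" shows "Q = (A - \<i> * B) / 2"
proof -
  have "\<i> * B = - (Q - P)" using assms(2) by (metis complex_i_mult_minus)
  then have p: "P = Q + \<i> * B" by simp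
  have "A = 2 * Q + \<i> * B" unfolding assms(1)[symmetric] p by simp
  then show ?thesis by simp
qed

lemma diag_bound:
  fixes X :: "complex^'n^'n"
  shows "\<exists>U. onb U \<and> trace_norm X \<le> (\<Sum>u\<in>U. cmod (cinner u (X *v u)))"
proof -
  obtain W where WW: "madj W ** W = mat 1" and WW': "W ** madj W = mat 1"
    and t: "trace (W ** X) = complex_of_real (trace_norm X)" using trace_attain[of X] by blast
  define H where "H = W + madj W"
  define K where "K = mscale \<i> (madj W - W)"
  have hH: "herm H" by (simp add: herm_def H_def madj_add add.commute)
  have hK: "herm K"
    by (simp add: herm_def K_def madj_def mscale_def vec_eq_iff algebra_simps)
  have ab: "W *v (madj W *v x) = x" "madj W *v (W *v x) = x" for x
    using WW WW' by (simp_all add: matrix_vector_mul_assoc)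
  have com: "H ** K = K ** H"
  proof (subst matrix_eq, rule allI)
    fix x
    show "(H ** K) *v x = (K ** H) *v x"
      by (simp add: matrix_vector_mul_assoc[symmetric] H_def K_def mscale_mv
          matrix_vector_mult_add_rdistrib matrix_vector_mult_diff_rdistrib
          matrix_vector_right_distrib matrix_vector_mult_diff_distrib vector_scalar_commute ab
          vector_add_ldistrib vector_ssub_ldistrib algebra_simps)
  qed
  obtain Ub where Ub: "onb Ub" and e: "\<forall>u\<in>Ub. ceig H K u" using spectral2[OF hH hK com] by blast
  have contr: "\<forall>y. norm (madj W *v y) \<le> norm y" using unitary_contr[OF WW'] .
  have eig: "\<exists>m. madj W *v u = m *s u \<and> cmod m \<le> 1" if u: "u \<in> Ub" for u
  proof -
    obtain a b where a: "H *v u = complex_of_real a *s u" and b: "K *v u = complex_of_real b *s u"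
    proof -
      have "ceig H K u" using e u by blast
      then show ?thesis using that unfolding ceig_def by blast
    qed
    have e1: "W *v u + madj W *v u = complex_of_real a *s u" using a by (simp add: H_def matrix_vector_mult_add_rdistrib)
    have e2: "\<i> *s (madj W *v u - W *v u) = complex_of_real b *s u"
      using b by (simp add: K_def mscale_mv matrix_vector_mult_diff_rdistrib)
    define m where "m = (complex_of_real a - \<i> * complex_of_real b) / 2"
    have mu: "madj W *v u = m *s u"
    proof (subst vec_eq_iff, rule allI)
      fix j
      have c1: "(W *v u)$j + (madj W *v u)$j = complex_of_real a * u$j" using e1 by (simp add: vec_eq_iff)
      have c2: "\<i> * ((madj W *v u)$j - (W *v u)$j) = complex_of_real b * u$j" using e2 by (simp add: vec_eq_iff right_diff_distrib)
      show "(madj W *v u)$j = (m *s u)$j"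
        using ceq[OF c1 c2] by (simp add: m_def field_simps)
    qed
    have "norm (m *s u) \<le> norm u" using contr mu by metis
    then have "cmod m * norm u \<le> norm u" by (simp add: norm_scale)
    then have "cmod m \<le> 1" using unit_of_onb[OF Ub u] by simp
    then show ?thesis using mu m_def by blast
  qed
  have "trace_norm X = Re (trace (W ** X))" using t by simp
  also have "\<dots> = Re (\<Sum>u\<in>Ub. cinner (madj W *v u) (X *v u))" by (simp add: trace_WX[OF Ub])
  also have "\<dots> \<le> cmod (\<Sum>u\<in>Ub. cinner (madj W *v u) (X *v u))" by (rule complex_Re_le_cmod)
  also have "\<dots> \<le> (\<Sum>u\<in>Ub. cmod (cinner (madj W *v u) (X *v u)))" by (rule norm_sum)
  also have "\<dots> \<le> (\<Sum>u\<in>Ub. cmod (cinner u (X *v u)))"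
  proof (rule sum_mono)
    fix u assume u: "u \<in> Ub"
    obtain m where m: "madj W *v u = m *s u" "cmod m \<le> 1" using eig[OF u] by blast
    have "cmod (cinner (madj W *v u) (X *v u)) = cmod m * cmod (cinner u (X *v u))"
      by (simp add: m cinner_scale_left norm_mult)
    also have "\<dots> \<le> 1 * cmod (cinner u (X *v u))" using m(2) by (intro mult_right_mono) auto
    finally show "cmod (cinner (madj W *v u) (X *v u)) \<le> cmod (cinner u (X *v u))" by simp
  qed
  finally show ?thesis using Ub by blast
qed

lemma minimal:
  fixes N :: "complex^'n^'n \<Rightarrow> real"
  assumes L: "is_L_norm N" and nr: "\<forall>A. numerical_radius A \<le> N A"
  shows "trace_norm X \<le> N X"
proof -
  obtain U where U: "onb U" and d: "trace_norm X \<le> (\<Sum>u\<in>U. cmod (cinner u (X *v u)))"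
    using diag_bound[of X] by blast
  have fU: "finite U" using U by (simp add: onb_def)
  define k where "k = card U"
  obtain f where f: "bij_betw f {0..<k} U" using ex_bij_betw_nat_finite[OF fU] k_def by blast
  have f': "bij_betw f {..<k} U" using f by (simp add: lessThan_atLeast0)
  define C where "C i = outer (f i) (f i)" for i
  have fin: "f i \<in> U" if "i < k" for i using f' that by (auto simp: bij_betw_def)
  have Cs: "(\<Sum>i<k. madj (C i) ** C i) = mat 1"
  proof -
    have "(\<Sum>i<k. madj (C i) ** C i) = (\<Sum>i<k. outer (f i) (f i))"
      using fin by (intro sum.cong) (auto simp: C_def outer_sq onb_orth[OF U])
    also have "\<dots> = (\<Sum>u\<in>U. outer u u)" by (rule sum.reindex_bij_betw[OF f'])
    also have "\<dots> = mat 1" by (rule onb_sum_outer[OF U])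
    finally show ?thesis .
  qed
  have mn: "is_matrix_norm N" using L by (simp add: is_L_norm_def)
  have Lp: "(\<Sum>i<k. N (C i ** X ** madj (C i))) \<le> N X"
    using L Cs unfolding is_L_norm_def by blast
  have each: "cmod (cinner u (X *v u)) \<le> N (outer u u ** X ** madj (outer u u))" if u: "u \<in> U" for u
  proof -
    have nu: "norm u = 1" using unit_of_onb[OF U u] .
    have "1 = cmod (cinner u (outer u u *v u))"
      using onb_orth[OF U u u] by (simp add: outer_mult_vec cinner_scale_right)
    also have "\<dots> \<le> numerical_radius (outer u u)" by (rule nr_ge[OF nu])
    also have "\<dots> \<le> N (outer u u)" using nr by blast
    finally have o1: "1 \<le> N (outer u u)" .
    have "N (outer u u ** X ** madj (outer u u)) = cmod (cinner u (X *v u)) * N (outer u u)"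
      using mn by (simp add: outer_X_outer is_matrix_norm_def)
    also have "\<dots> \<ge> cmod (cinner u (X *v u)) * 1" using o1 by (intro mult_left_mono) auto
    finally show ?thesis by simp
  qed
  have "(\<Sum>u\<in>U. cmod (cinner u (X *v u))) = (\<Sum>i<k. cmod (cinner (f i) (X *v f i)))"
    by (rule sum.reindex_bij_betw[OF f', symmetric])
  also have "\<dots> \<le> (\<Sum>i<k. N (C i ** X ** madj (C i)))"
    by (rule sum_mono) (simp add: C_def each fin)
  also have "\<dots> \<le> N X" by (rule Lp)
  finally show ?thesis using d by simp
qed

theorem theorem3p4:
  shows "(is_L_norm (trace_norm :: complex^'n^'n \<Rightarrow> real) \<and>
          (\<forall>A::complex^'n^'n. numerical_radius A \<le> trace_norm A)) \<and>
         (\<forall>N::complex^'n^'n \<Rightarrow> real. is_L_norm N \<and> (\<forall>A. numerical_radius A \<le> N A) \<longrightarrow>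
            (\<forall>A. trace_norm A \<le> N A))"
  using tn_L nr_le_tn minimal by blast

end
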